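(* Let $g:(0,\infty)\to(0,\infty)$ decrease monotonically to zero. Let $b\in\mathbb N$ and let $\mathfrak A\subseteq\mathfrak E(B_b)$ be an edge set with $|\mathfrak A|=m$. Then $$\mathbb P\Big[\liminf_{n\to\infty}\bigcap_{z\in B_{n+b}}J_{g(n)}(\mathfrak A\circ\tau_z)\Big]=\begin{cases}1,&\text{if }\int_0^\infty u^{d-1}\mathbb P[w\le g(u)]^m\,du<\infty,\\ 0,&\text{otherwise.}\end{cases}$$
   Context: Let $d\ge2$, $\mathfrak E_d$ the nearest-neighbour edges of $\mathbb Z^d$. Conductances $(w_e)_{e\in\mathfrak E_d}$ are i.i.d. $(0,\infty)$-valued with law $\mathbb P$; $w$ a generic copy. $B_n=[-n,n]^d\cap\mathbb Z^d$. For $\alpha>0$ and $\mathfrak A\subseteq\mathfrak E_d$, $J_\alpha(\mathfrak A)=\{\exists e\in\mathfrak A: w_e>\alpha\}$. For $A\subset\mathbb Z^d$, $\mathfrak E(A)=\{\{x,x+\boldsymbol e_j\}: x\in A,\ j\in\{1,\dots,d\}\}$ with $\boldsymbol e_j$ the canonical basis vectors. For $z\in\mathbb Z^d$, $\mathfrak A\circ\tau_z=\{\{x+z,y+z\}:\{x,y\}\in\mathfrak A\}$. For events $E_n$, $\liminf_n E_n=\bigcup_n\bigcap_{k\ge n}E_k$. *)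

theory Defs
  imports "HOL-Probability.Probability"
begin

text \<open>Points of Z^d are int^'d, with d = CARD('d). Edges are unordered pairs,
represented as two-element sets of points.\<close>

definition nn_edges :: "(int^'d) set set" where
  "nn_edges = {{x, x + axis j 1} | x j. True}"

definition box :: "nat \<Rightarrow> (int^'d) set" where
  "box n = {x. \<forall>i. \<bar>x $ i\<bar> \<le> int n}"

definition edges_of :: "(int^'d) set \<Rightarrow> (int^'d) set set" where
  "edges_of A = {{x, x + axis j 1} | x j. x \<in> A}"

definition shift_edges :: "(int^'d) set set \<Rightarrow> int^'d \<Rightarrow> (int^'d) set set" where
  "shift_edges \<A> z = (\<lambda>e. (\<lambda>x. x + z) ` e) ` \<A>"

definition J_event :: "'a measure \<Rightarrow> ((int^'d) set \<Rightarrow> 'a \<Rightarrow> real) \<Rightarrow> real \<Rightarrow> (int^'d) set set \<Rightarrow> 'a set" where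
  "J_event M w \<alpha> \<A> = {\<omega> \<in> space M. \<exists>e\<in>\<A>. w e \<omega> > \<alpha>}"

end

theory Submission
  imports Defs
begin



lemma vec_set_eq: "{z::'b^'d. \<forall>i. z$i \<in> T i} = vec_lambda ` (PiE UNIV T)"
proof (rule set_eqI, rule iffI)
  fix z :: "'b^'d" assume "z \<in> {z. \<forall>i. z$i \<in> T i}"
  then have "(\<lambda>i. z$i) \<in> PiE UNIV T" by auto
  moreover have "z = vec_lambda (\<lambda>i. z$i)" by simp
  ultimately show "z \<in> vec_lambda ` (PiE UNIV T)" by blast
qed auto

lemma card_vec_set:
  assumes "\<And>i. finite (T i)"
  shows "card {z::'b^'d. \<forall>i. z$i \<in> T i} = (\<Prod>i\<in>UNIV. card (T i))"
    and "finite {z::'b^'d. \<forall>i. z$i \<in> T i}"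
proof -
  have inj: "inj_on (vec_lambda :: ('d \<Rightarrow> 'b) \<Rightarrow> 'b^'d) (PiE UNIV T)"
    by (intro inj_onI) (metis vec_lambda_inverse UNIV_I)
  have fin: "finite (PiE UNIV T)" using assms by (intro finite_PiE) auto
  show "card {z::'b^'d. \<forall>i. z$i \<in> T i} = (\<Prod>i\<in>UNIV. card (T i))"
    unfolding vec_set_eq using card_image[OF inj] card_PiE[of UNIV T] by simp
  show "finite {z::'b^'d. \<forall>i. z$i \<in> T i}" unfolding vec_set_eq using fin by simp
qed

lemma box_eq: "box n = {z::int^'d. \<forall>i. z$i \<in> {-int n..int n}}"
  unfolding box_def by (simp add: abs_le_iff minus_le_iff conj_commute)

lemma finite_box: "finite (box n :: (int^'d) set)"
  unfolding box_eq by (rule card_vec_set) auto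

lemma box_mono: "n \<le> n' \<Longrightarrow> box n \<subseteq> box n'"
  unfolding box_def by (auto intro: order_trans)

lemma zero_in_box: "0 \<in> box n" unfolding box_def by auto

lemma axis_abs_le: "\<bar>(axis j (1::int)) $ i\<bar> \<le> 1"
  by (simp add: axis_def)

lemma edges_of_sub: "edges_of S \<subseteq> nn_edges"
  unfolding edges_of_def nn_edges_def by blast

lemma shift_nn: assumes "\<A> \<subseteq> nn_edges" shows "shift_edges \<A> z \<subseteq> nn_edges"
proof
  fix e assume "e \<in> shift_edges \<A> z"
  then obtain e0 where e0: "e0 \<in> \<A>" "e = (\<lambda>x. x + z) ` e0" unfolding shift_edges_def by auto
  then obtain x j where "e0 = {x, x + axis j 1}" using assms unfolding nn_edges_def by auto
  then have "e = {x + z, (x + z) + axis j 1}" using e0 by (auto simp: algebra_simps)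
  then show "e \<in> nn_edges" unfolding nn_edges_def by blast
qed

lemma finite_edges_of: assumes "finite S" shows "finite (edges_of S)"
proof -
  have "edges_of S = (\<lambda>(x,j). {x, x + axis j 1}) ` (S \<times> UNIV)"
    unfolding edges_of_def by auto
  then show ?thesis using assms by simp
qed

lemma card_shift: "card (shift_edges \<A> z) = card \<A>"
proof -
  have "inj (\<lambda>e. (\<lambda>x. x + z) ` e)"
    by (intro injI) (metis (no_types) add_right_imp_eq inj_def inj_image_eq_iff)
  then show ?thesis unfolding shift_edges_def by (simp add: card_image inj_on_subset)
qed

lemma finite_shift: "finite \<A> \<Longrightarrow> finite (shift_edges \<A> z)"
  unfolding shift_edges_def by simp

lemma shift_overlap:
  assumes "\<A> \<subseteq> edges_of (box b)" "e \<in> shift_edges \<A> z" "e \<in> shift_edges \<A> z'"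
  shows "\<bar>z$i - z'$i\<bar> \<le> 2 * int b + 1"
proof -
  from assms(2) obtain x j where x: "x \<in> box b" "e = {x + z, x + axis j 1 + z}"
    using assms(1) unfolding shift_edges_def edges_of_def by auto
  from assms(3) obtain x' j' where x': "x' \<in> box b" "e = {x' + z', x' + axis j' 1 + z'}"
    using assms(1) unfolding shift_edges_def edges_of_def by auto
  have bx: "\<bar>x$i\<bar> \<le> int b" "\<bar>x'$i\<bar> \<le> int b" using x x' unfolding box_def by auto
  have "x + z = x' + z' \<or> x + z = x' + axis j' 1 + z'" using x x' by auto
  then show ?thesis
  proof
    assume "x + z = x' + z'"
    then have "x$i + z$i = x'$i + z'$i" by (metis vector_add_component)
    then show ?thesis using bx by linarith
  next
    assume "x + z = x' + axis j' 1 + z'"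
    then have "x$i + z$i = x'$i + (axis j' 1)$i + z'$i" by (metis vector_add_component)
    then show ?thesis using bx axis_abs_le[of j' i] by linarith
  qed
qed




locale setting = prob_space M
  for M :: "'a measure" +
  fixes w :: "(int^'d) set \<Rightarrow> 'a \<Rightarrow> real"
    and \<mu> :: "real measure"
    and g :: "real \<Rightarrow> real"
    and b :: nat
    and \<A> :: "(int^'d) set set"
  assumes indep: "indep_vars (\<lambda>_. borel) w nn_edges"
    and distr_w: "\<And>e. e \<in> nn_edges \<Longrightarrow> distr M borel (w e) = \<mu>"
    and w_pos: "\<And>e \<omega>. e \<in> nn_edges \<Longrightarrow> \<omega> \<in> space M \<Longrightarrow> w e \<omega> > 0"
    and g_pos: "\<And>u. u > 0 \<Longrightarrow> g u > 0"
    and g_mono: "\<And>u v. 0 < u \<Longrightarrow> u \<le> v \<Longrightarrow> g v \<le> g u"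
    and g_lim: "(g \<longlongrightarrow> 0) at_top"
    and A_sub: "\<A> \<subseteq> edges_of (box b)"
begin

definition Bad :: "real \<Rightarrow> (int^'d) set set \<Rightarrow> 'a set" where
  "Bad t S = {\<omega> \<in> space M. \<forall>e\<in>S. w e \<omega> \<le> t}"

lemma w_meas: "e \<in> nn_edges \<Longrightarrow> w e \<in> borel_measurable M"
  using indep unfolding indep_vars_def by auto

lemma A_nn: "\<A> \<subseteq> nn_edges" using A_sub edges_of_sub by blast

lemma A_fin: "finite \<A>"
  using A_sub finite_edges_of[OF finite_box] finite_subset by blast

lemma shiftA_nn: "shift_edges \<A> z \<subseteq> nn_edges" using shift_nn[OF A_nn] .

lemma shiftA_fin: "finite (shift_edges \<A> z)" using finite_shift[OF A_fin] .

lemma Bad_sets: assumes "finite S" "S \<subseteq> nn_edges" shows "Bad t S \<in> events"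
proof -
  have "Bad t S = space M - (\<Union>e\<in>S. {\<omega>\<in>space M. t < w e \<omega>})"
    unfolding Bad_def by auto
  also have "\<dots> \<in> events"
    using assms w_meas by (intro sets.Diff sets.top sets.finite_UN) auto
  finally show ?thesis .
qed

lemma J_eq: "J_event M w t S = space M - Bad t S"
  unfolding J_event_def Bad_def by (auto simp: not_le)

lemma J_sets: assumes "finite S" "S \<subseteq> nn_edges" shows "J_event M w t S \<in> events"
  unfolding J_eq using Bad_sets[OF assms] by auto

lemma prob_single: assumes "e \<in> nn_edges" shows "prob (w e -` {..t} \<inter> space M) = measure \<mu> {..t}"
proof -
  have "measure \<mu> {..t} = measure (distr M borel (w e)) {..t}" using distr_w[OF assms] by simp
  also have "\<dots> = prob (w e -` {..t} \<inter> space M)"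
    using w_meas[OF assms] by (intro measure_distr) auto
  finally show ?thesis by simp
qed

lemma prob_Bad: assumes "finite S" "S \<noteq> {}" "S \<subseteq> nn_edges"
  shows "prob (Bad t S) = measure \<mu> {..t} ^ card S"
proof -
  have "Bad t S = (\<Inter>e\<in>S. w e -` {..t} \<inter> space M)"
    unfolding Bad_def using assms(2) by auto
  then have "prob (Bad t S) = (\<Prod>e\<in>S. prob (w e -` {..t} \<inter> space M))"
    using indep_varsD[OF indep assms(2,1,3), of "\<lambda>_. {..t}"] by simp
  also have "\<dots> = (\<Prod>e\<in>S. measure \<mu> {..t})"
    using assms(3) prob_single by (intro prod.cong) auto
  finally show ?thesis by simp
qed

end



lemma sum_ind:
  fixes K a u :: real and c :: "nat \<Rightarrow> real"
  assumes K: "K > 0"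
  shows "(\<Sum>s. ennreal (c s) * indicator {a + K*real s <.. a + K*(real s+1)} u)
       = (if a < u then ennreal (c (nat (ceiling ((u-a)/K) - 1))) else 0)"
proof (cases "a < u")
  case True
  define s0 where "s0 = nat (ceiling ((u-a)/K) - 1)"
  have pos: "(u-a)/K > 0" using True K by simp
  have c1: "ceiling ((u-a)/K) \<ge> 1" using pos by (simp add: order.strict_iff_not ceiling_le_zero)
  have key: "u \<in> {a + K*real s <.. a + K*(real s+1)} \<longleftrightarrow> s = s0" for s
  proof -
    have "u \<in> {a + K*real s <.. a + K*(real s+1)} \<longleftrightarrow> real s < (u-a)/K \<and> (u-a)/K \<le> real s + 1"
      using K by (auto simp: field_simps)
    also have "\<dots> \<longleftrightarrow> ceiling ((u-a)/K) = int s + 1"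
      by (simp add: ceiling_eq_iff)
    also have "\<dots> \<longleftrightarrow> s = s0" unfolding s0_def using c1 by auto
    finally show ?thesis .
  qed
  have "(\<Sum>s. ennreal (c s) * indicator {a + K*real s <.. a + K*(real s+1)} u)
      = (\<Sum>s\<in>{s0}. ennreal (c s) * indicator {a + K*real s <.. a + K*(real s+1)} u)"
    by (rule suminf_finite) (use key in auto)
  also have "\<dots> = ennreal (c s0)" using key[of s0] by simp
  finally show ?thesis using True s0_def by simp
next
  case False
  have "u \<notin> {a + K*real s <.. a + K*(real s+1)}" for s
    using False K by (auto simp: not_less) (smt (verit) mult_nonneg_nonneg of_nat_0_le_iff)
  then show ?thesis using False by simp
qed

lemma int_sum:
  fixes K a :: real and c :: "nat \<Rightarrow> real"
  assumes K: "K > 0"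
  shows "(\<integral>\<^sup>+ u. (\<Sum>s. ennreal (c s) * indicator {a + K*real s <.. a + K*(real s+1)} u) \<partial>lborel)
       = (\<Sum>s. ennreal (c s) * ennreal K)"
proof -
  have "(\<integral>\<^sup>+ u. (\<Sum>s. ennreal (c s) * indicator {a + K*real s <.. a + K*(real s+1)} u) \<partial>lborel)
     = (\<Sum>s. \<integral>\<^sup>+ u. ennreal (c s) * indicator {a + K*real s <.. a + K*(real s+1)} u \<partial>lborel)"
    by (intro nn_integral_suminf) auto
  also have "\<dots> = (\<Sum>s. ennreal (c s) * ennreal K)"
    using K by (intro suminf_cong) (simp add: nn_integral_cmult_indicator algebra_simps)
  finally show ?thesis .
qed

lemma int_lower:
  fixes f :: "real \<Rightarrow> real" and c :: "nat \<Rightarrow> real"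
  assumes "\<And>s u. real s < u \<Longrightarrow> u \<le> real s + 1 \<Longrightarrow> c s \<le> f u"
  shows "(\<Sum>s. ennreal (c s)) \<le> (\<integral>\<^sup>+ u\<in>{0<..}. ennreal (f u) \<partial>lborel)"
proof -
  have "(\<Sum>s. ennreal (c s)) = (\<integral>\<^sup>+ u. (\<Sum>s. ennreal (c s) * indicator {0 + 1*real s <.. 0 + 1*(real s+1)} u) \<partial>lborel)"
    using int_sum[of 1 c 0] by simp
  also have "\<dots> \<le> (\<integral>\<^sup>+ u\<in>{0<..}. ennreal (f u) \<partial>lborel)"
  proof (rule nn_integral_mono)
    fix u :: real
    show "(\<Sum>s. ennreal (c s) * indicator {0 + 1*real s <.. 0 + 1*(real s+1)} u) \<le> ennreal (f u) * indicator {0<..} u"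
    proof (cases "0 < u")
      case True
      define s0 where "s0 = nat (ceiling u - 1)"
      have "real s0 < u" "u \<le> real s0 + 1" unfolding s0_def using True
        by (auto simp: of_nat_nat ceiling_le_zero) (linarith+)
      then have "c s0 \<le> f u" by (rule assms)
      then show ?thesis using sum_ind[of 1 c 0 u] True s0_def by (simp add: ennreal_leI)
    next
      case False
      then show ?thesis using sum_ind[of 1 c 0 u] by simp
    qed
  qed
  finally show ?thesis .
qed

lemma int_upper:
  fixes f :: "real \<Rightarrow> real" and c :: "nat \<Rightarrow> real" and K a :: real
  assumes K: "K > 0" and a: "a \<le> 0"
    and "\<And>s u. 0 < u \<Longrightarrow> a + K * real s < u \<Longrightarrow> u \<le> a + K * (real s + 1) \<Longrightarrow> f u \<le> c s"
  shows "(\<integral>\<^sup>+ u\<in>{0<..}. ennreal (f u) \<partial>lborel) \<le> (\<Sum>s. ennreal (c s) * ennreal K)"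
proof -
  have "(\<integral>\<^sup>+ u\<in>{0<..}. ennreal (f u) \<partial>lborel)
     \<le> (\<integral>\<^sup>+ u. (\<Sum>s. ennreal (c s) * indicator {a + K*real s <.. a + K*(real s+1)} u) \<partial>lborel)"
  proof (rule nn_integral_mono)
    fix u :: real
    show "ennreal (f u) * indicator {0<..} u \<le> (\<Sum>s. ennreal (c s) * indicator {a + K*real s <.. a + K*(real s+1)} u)"
    proof (cases "0 < u")
      case True
      define s0 where "s0 = nat (ceiling ((u-a)/K) - 1)"
      have pos: "(u-a)/K > 0" using True K a by simp
      have c1: "ceiling ((u-a)/K) \<ge> 1" using pos by (simp add: order.strict_iff_not ceiling_le_zero)
      have "real s0 < (u-a)/K" "(u-a)/K \<le> real s0 + 1" unfolding s0_def using c1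
        by (auto simp: of_nat_nat) (linarith+)
      then have "a + K * real s0 < u" "u \<le> a + K * (real s0 + 1)" using K by (auto simp: field_simps)
      then have "f u \<le> c s0" using assms(3) True by blast
      moreover have "a < u" using True a by linarith
      ultimately show ?thesis using sum_ind[OF K, of c a u] s0_def True by (simp add: ennreal_leI)
    next
      case False
      then show ?thesis by simp
    qed
  qed
  also have "\<dots> = (\<Sum>s. ennreal (c s) * ennreal K)" by (rule int_sum[OF K])
  finally show ?thesis .
qed




lemma card_shell:
  assumes r: "r \<ge> 1"
  shows "card (box r - box (r - 1) :: (int^'d) set) \<le> 2 * CARD('d) * (2*r+1) ^ (CARD('d) - 1)"
proof -
  define T :: "'d \<Rightarrow> 'd \<Rightarrow> int set" where
    "T i j = (if j = i then {- int r, int r} else {- int r..int r})" for i j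
  define S where "S i = {z::int^'d. \<forall>j. z$j \<in> T i j}" for i
  have fin: "finite (T i j)" for i j unfolding T_def by auto
  have sub: "box r - box (r - 1) \<subseteq> (\<Union>i. S i)"
  proof
    fix z :: "int^'d" assume z: "z \<in> box r - box (r - 1)"
    then obtain i where i: "\<not> \<bar>z$i\<bar> \<le> int (r - 1)" unfolding box_def by auto
    have all: "\<bar>z$j\<bar> \<le> int r" for j using z unfolding box_def by auto
    have "\<bar>z$i\<bar> = int r" using i all[of i] r by linarith
    then have "z$i \<in> {- int r, int r}" by (auto simp: abs_if split: if_splits)
    moreover have "z$j \<in> {- int r..int r}" for j using all[of j] by (auto simp: abs_le_iff)
    ultimately have "z \<in> S i" unfolding S_def T_def by auto
    then show "z \<in> (\<Union>i. S i)" by blast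
  qed
  have cS: "card (S i) = 2 * (2*r+1) ^ (CARD('d) - 1)" for i
  proof -
    have "card (S i) = (\<Prod>j\<in>UNIV. card (T i j))" unfolding S_def by (rule card_vec_set(1)) (rule fin)
    also have "\<dots> = card (T i i) * (\<Prod>j\<in>UNIV - {i}. card (T i j))"
      by (rule prod.remove) auto
    also have "(\<Prod>j\<in>UNIV - {i}. card (T i j)) = (\<Prod>j\<in>UNIV - {i}. 2*r+1)"
      unfolding T_def by (intro prod.cong) (auto simp: nat_add_distrib)
    also have "\<dots> = (2*r+1) ^ (CARD('d) - 1)" by (simp add: card_Diff_singleton)
    also have "card (T i i) = 2" unfolding T_def using r by auto
    finally show ?thesis .
  qed
  have finS: "finite (S i)" for i unfolding S_def by (rule card_vec_set(2)) (rule fin)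
  have "card (box r - box (r - 1) :: (int^'d) set) \<le> card (\<Union>i. S i)"
    using sub finS by (intro card_mono) auto
  also have "\<dots> \<le> (\<Sum>i\<in>UNIV. card (S i))" by (rule card_UN_le) simp
  also have "\<dots> = CARD('d) * (2 * (2*r+1) ^ (CARD('d) - 1))" using cS by simp
  finally show ?thesis by simp
qed




context setting begin

definition LE where
  "LE = (\<Union>n\<in>{1..}. \<Inter>k\<in>{n..}. \<Inter>z\<in>box (k + b). J_event M w (g (real k)) (shift_edges \<A> z))"

definition p :: "real \<Rightarrow> real" where "p t = measure \<mu> {..t}"
definition q :: "real \<Rightarrow> real" where "q u = p (g u) ^ card \<A>"

lemma LE_sets: "LE \<in> events"
proof -
  have inner: "(\<Inter>z\<in>box (k + b). J_event M w (g (real k)) (shift_edges \<A> z)) \<in> events" for k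
    by (rule sets.countable_INT') (use J_sets[OF shiftA_fin shiftA_nn] in \<open>auto intro: countable_finite finite_box zero_in_box\<close>)
  have mid: "(\<Inter>k\<in>{n..}. \<Inter>z\<in>box (k + b). J_event M w (g (real k)) (shift_edges \<A> z)) \<in> events" for n
    by (rule sets.countable_INT') (use inner in auto)
  show ?thesis unfolding LE_def by (rule sets.countable_UN'') (use mid in auto)
qed

lemma ex_edge: "{0, 0 + axis j 1} \<in> nn_edges" unfolding nn_edges_def by blast

lemma mu_prob: "prob_space \<mu>"
proof -
  have "\<mu> = distr M borel (w {0, 0 + axis undefined 1})" using distr_w[OF ex_edge] by simp
  then show ?thesis using w_meas[OF ex_edge] by (simp add: prob_space_distr)
qed

lemma mu_sets: "sets \<mu> = sets borel"
  using distr_w[OF ex_edge, of undefined] by (metis sets_distr)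

lemma p_nonneg: "0 \<le> p t" unfolding p_def by simp
lemma p_le1: "p t \<le> 1" unfolding p_def using prob_space.prob_le_1[OF mu_prob] by simp
lemma p_mono: assumes "s \<le> t" shows "p s \<le> p t"
proof -
  interpret P: prob_space \<mu> by (rule mu_prob)
  show ?thesis unfolding p_def using assms mu_sets by (intro P.finite_measure_mono) auto
qed

lemma q_nonneg: "0 \<le> q u" unfolding q_def using p_nonneg by simp
lemma q_le1: "q u \<le> 1" unfolding q_def using p_nonneg p_le1 by (simp add: power_le_one)
lemma q_mono: "0 < u \<Longrightarrow> u \<le> v \<Longrightarrow> q v \<le> q u"
  unfolding q_def using p_nonneg p_mono g_mono by (simp add: power_mono)

lemma prob_Bad_shift: assumes "\<A> \<noteq> {}" shows "prob (Bad t (shift_edges \<A> z)) = p t ^ card \<A>"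
proof -
  have "shift_edges \<A> z \<noteq> {}" using assms unfolding shift_edges_def by auto
  have "card (shift_edges \<A> z) = card \<A>" by (rule card_shift)
  then show ?thesis using prob_Bad[OF shiftA_fin \<open>shift_edges \<A> z \<noteq> {}\<close> shiftA_nn, of t] p_def by simp
qed

lemma Bad_mono: "s \<le> t \<Longrightarrow> Bad s S \<subseteq> Bad t S" unfolding Bad_def by auto

lemma real_power_le_int: "0 \<le> x \<Longrightarrow> x \<le> y \<Longrightarrow> x ^ n \<le> (y::real) ^ n" by (rule power_mono)

end



context setting begin

lemma integrand_eq: "u ^ (CARD('d) - 1) * measure \<mu> {..g u} ^ card \<A> = u ^ (CARD('d) - 1) * q u"
  unfolding q_def p_def by simp

lemma conv:
  assumes Ane: "\<A> \<noteq> {}"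
    and fin: "(\<integral>\<^sup>+ u\<in>{0<..}. ennreal (u ^ (CARD('d) - 1) * measure \<mu> {..g u} ^ card \<A>) \<partial>lborel) < \<infinity>"
  shows "prob LE = 1"
proof -
  define D where "D = CARD('d) - 1"
  define a where "a s = real s ^ D * q (real s + 1)" for s :: nat
  have a_nonneg: "0 \<le> a s" for s unfolding a_def using q_nonneg by simp
  have "(\<Sum>s. ennreal (a s)) \<le> (\<integral>\<^sup>+ u\<in>{0<..}. ennreal (u ^ (CARD('d) - 1) * measure \<mu> {..g u} ^ card \<A>) \<partial>lborel)"
  proof (rule int_lower)
    fix s :: nat and u :: real assume su: "real s < u" "u \<le> real s + 1"
    have u0: "0 < u" using su(1) by (smt (verit) of_nat_0_le_iff)
    have "real s ^ D \<le> u ^ D" using su by (intro power_mono) auto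
    moreover have "q (real s + 1) \<le> q u" using q_mono u0 su(2) by blast
    ultimately have "a s \<le> u ^ D * q u" unfolding a_def using q_nonneg u0
      by (intro mult_mono) auto
    then show "a s \<le> u ^ (CARD('d) - 1) * measure \<mu> {..g u} ^ card \<A>"
      unfolding integrand_eq D_def .
  qed
  then have "(\<Sum>s. ennreal (a s)) \<noteq> top" using fin by (auto simp: top_unique)
  then have sum_a: "summable a" using a_nonneg by (intro summable_suminf_not_top) auto
  define shell where "shell r = (box r - box (r - 1) :: (int^'d) set)" for r
  define F where "F r = (\<Union>z\<in>shell r. Bad (g (real (max (r - b) 1))) (shift_edges \<A> z))" for r
  have F_sets: "F r \<in> events" for r
    unfolding F_def shell_def using Bad_sets[OF shiftA_fin shiftA_nn] finite_box
    by (intro sets.finite_UN) auto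
  have F_le: "prob (F r) \<le> real (card (shell r)) * q (real (max (r - b) 1))" for r
  proof -
    have "prob (F r) \<le> (\<Sum>z\<in>shell r. prob (Bad (g (real (max (r - b) 1))) (shift_edges \<A> z)))"
      unfolding F_def shell_def using Bad_sets[OF shiftA_fin shiftA_nn] finite_box
      by (intro measure_subadditive_finite) (auto simp: emeasure_eq_measure)
    also have "\<dots> = real (card (shell r)) * q (real (max (r - b) 1))"
      using prob_Bad_shift[OF Ane] unfolding q_def by simp
    finally show ?thesis .
  qed
  define C where "C = 2 * real CARD('d) * (2 * real b + 5) ^ D"
  have sumF: "summable (\<lambda>r. prob (F r))"
  proof (rule summable_comparison_test')
    show "summable (\<lambda>r. C * a (r - (b + 1)))"
    proof -
      have "summable (\<lambda>n. C * a (n + (b + 1) - (b + 1)))" using sum_a by (simp add: summable_mult)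
      then show ?thesis by (subst summable_iff_shift[symmetric, of _ "b+1"])
    qed
  next
    fix r assume r: "r \<ge> b + 2"
    define s where "s = r - (b + 1)"
    have s1: "s \<ge> 1" "r = s + b + 1" using r unfolding s_def by auto
    have mx: "real (max (r - b) 1) = real s + 1" using s1 by auto
    have "norm (prob (F r)) = prob (F r)" by simp
    also have "\<dots> \<le> real (card (shell r)) * q (real s + 1)" using F_le[of r] mx by simp
    also have "\<dots> \<le> (2 * real CARD('d) * (2 * real r + 1) ^ D) * q (real s + 1)"
    proof (rule mult_right_mono[OF _ q_nonneg])
      have "card (shell r) \<le> 2 * CARD('d) * (2*r+1) ^ (CARD('d) - 1)"
        unfolding shell_def using s1 by (intro card_shell) auto
      then have "real (card (shell r)) \<le> real (2 * CARD('d) * (2*r+1) ^ (CARD('d) - 1))"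
        by linarith
      moreover have "real (2 * CARD('d) * (2*r+1) ^ (CARD('d) - 1)) = 2 * real CARD('d) * (2 * real r + 1) ^ D"
        unfolding D_def by (simp add: add.commute[of 1])
      ultimately show "real (card (shell r)) \<le> 2 * real CARD('d) * (2 * real r + 1) ^ D"
        by linarith
    qed
    also have "\<dots> \<le> (2 * real CARD('d) * ((2 * real b + 5) * real s) ^ D) * q (real s + 1)"
    proof (intro mult_right_mono[OF _ q_nonneg] mult_left_mono power_mono)
      have rs: "real r = real s + real b + 1" using s1 by simp
      have "real s \<ge> 1" using s1 by simp
      moreover have "real b * real s \<ge> real b * 1" using s1 by (intro mult_left_mono) auto
      ultimately show "2 * real r + 1 \<le> (2 * real b + 5) * real s"
        unfolding rs by (simp add: algebra_simps)
    qed auto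
    also have "\<dots> = C * a (r - (b + 1))"
      unfolding C_def a_def s_def[symmetric] by (simp add: power_mult_distrib)
    finally show "norm (prob (F r)) \<le> C * a (r - (b + 1))" .
  qed
  have BC: "AE \<omega> in M. eventually (\<lambda>r. \<omega> \<in> space M - F r) sequentially"
    by (rule borel_cantelli_AE1) (use F_sets sumF in \<open>auto simp: emeasure_eq_measure\<close>)
  obtain e0 where e0: "e0 \<in> \<A>" using Ane by blast
  have glim': "((\<lambda>k. g (real k)) \<longlongrightarrow> 0) sequentially"
    using g_lim filterlim_real_sequentially by (rule filterlim_compose)
  have main: "\<omega> \<in> LE" if \<omega>: "\<omega> \<in> space M" and ev: "eventually (\<lambda>r. \<omega> \<in> space M - F r) sequentially" for \<omega>
  proof (rule ccontr)
    assume nL: "\<omega> \<notin> LE"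
    obtain R where R: "\<And>r. r \<ge> R \<Longrightarrow> \<omega> \<notin> F r" using ev unfolding eventually_sequentially by auto
    have bad: "\<exists>k\<ge>n. \<exists>z\<in>box (k + b). \<omega> \<in> Bad (g (real k)) (shift_edges \<A> z)" if "n \<ge> 1" for n
      using nL that \<omega> unfolding LE_def J_eq by blast
    have inR: "z \<in> box R" if k: "k \<ge> 1" "z \<in> box (k + b)" "\<omega> \<in> Bad (g (real k)) (shift_edges \<A> z)" for k z
    proof -
      define r where "r = (LEAST r. z \<in> box r)"
      have zr: "z \<in> box r" unfolding r_def using k(2) by (rule LeastI)
      have rk: "r \<le> k + b" unfolding r_def using k(2) by (rule Least_le)
      show ?thesis
      proof (cases "r = 0")
        case True then show ?thesis using zr box_mono[of 0 R] by auto
      next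
        case False
        have "z \<notin> box (r - 1)" unfolding r_def using False
          by (metis diff_less less_numeral_extra(1) neq0_conv not_less_Least r_def)
        then have zs: "z \<in> shell r" using zr unfolding shell_def by auto
        have "max (r - b) 1 \<le> k" using rk k(1) by auto
        then have "g (real k) \<le> g (real (max (r - b) 1))" by (intro g_mono) auto
        then have "\<omega> \<in> Bad (g (real (max (r - b) 1))) (shift_edges \<A> z)"
          using k(3) Bad_mono by blast
        then have "\<omega> \<in> F r" unfolding F_def using zs by blast
        then have "r < R" using R by (meson not_le)
        then show ?thesis using zr box_mono[of r R] by auto
      qed
    qed
    define sh where "sh z = (\<lambda>x. x + z) ` e0" for z :: "int^'d"
    have sh_in: "sh z \<in> shift_edges \<A> z" for z unfolding sh_def shift_edges_def using e0 by auto
    have sh_nn: "sh z \<in> nn_edges" for z using sh_in shiftA_nn by blast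
    define c where "c = Min ((\<lambda>z. w (sh z) \<omega>) ` box R)"
    have c_pos: "c > 0" unfolding c_def using finite_box zero_in_box w_pos[OF sh_nn \<omega>]
      by (subst Min_gr_iff) auto
    have c_le: "c \<le> w (sh z) \<omega>" if "z \<in> box R" for z
      unfolding c_def using that finite_box by (intro Min_le) auto
    obtain n0 where n0: "\<And>k. k \<ge> n0 \<Longrightarrow> g (real k) < c"
      using order_tendstoD(2)[OF glim' c_pos] unfolding eventually_sequentially by auto
    obtain k z where kz: "k \<ge> max n0 1" "z \<in> box (k + b)" "\<omega> \<in> Bad (g (real k)) (shift_edges \<A> z)"
      using bad[of "max n0 1"] by auto
    have "z \<in> box R" using inR[of k z] kz by auto
    then have "c \<le> w (sh z) \<omega>" by (rule c_le)
    also have "w (sh z) \<omega> \<le> g (real k)" using kz(3) sh_in unfolding Bad_def by auto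
    also have "\<dots> < c" using n0 kz(1) by auto
    finally show False by simp
  qed
  have "AE \<omega> in M. \<omega> \<in> LE"
    using BC by (rule AE_mp) (auto intro!: AE_I2 main)
  then show ?thesis using prob_eq_1[OF LE_sets] by simp
qed

end



context setting begin

definition Kc :: nat where "Kc = 2 * b + 2"
definition Tset :: "nat \<Rightarrow> 'd \<Rightarrow> int set" where
  "Tset s j = (if j = undefined then {int Kc * int s} else (\<lambda>t. int Kc * t) ` {0..<int s})"
definition Zs :: "nat \<Rightarrow> (int^'d) set" where "Zs s = {z. \<forall>j. z$j \<in> Tset s j}"
definition Y :: "int^'d \<Rightarrow> 'a \<Rightarrow> real" where "Y z \<omega> = Max ((\<lambda>e. w e \<omega>) ` shift_edges \<A> z)"

lemma max_meas: "finite S \<Longrightarrow> (\<lambda>f. Max (f ` S)) \<in> borel_measurable (PiM S (\<lambda>_. (borel::real measure)))"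
  by measurable

lemma Kc_pos: "Kc > 0" unfolding Kc_def by simp

lemma Tset_fin: "finite (Tset s j)" unfolding Tset_def by auto

lemma Zs_fin: "finite (Zs s)" unfolding Zs_def by (rule card_vec_set(2)) (rule Tset_fin)

lemma card_Zs: "card (Zs s) = s ^ (CARD('d) - 1)"
proof -
  have injK: "inj_on (\<lambda>t::int. int Kc * t) X" for X using Kc_pos by (intro inj_onI) auto
  have "card (Zs s) = (\<Prod>j\<in>UNIV. card (Tset s j))" unfolding Zs_def by (rule card_vec_set(1)) (rule Tset_fin)
  also have "\<dots> = card (Tset s undefined) * (\<Prod>j\<in>UNIV - {undefined}. card (Tset s j))"
    by (rule prod.remove) auto
  also have "(\<Prod>j\<in>UNIV - {undefined}. card (Tset s j)) = (\<Prod>j\<in>UNIV - {undefined::'d}. s)"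
    unfolding Tset_def by (intro prod.cong) (auto simp: card_image[OF injK])
  also have "\<dots> = s ^ (CARD('d) - 1)" by (simp add: card_Diff_singleton)
  also have "card (Tset s undefined) = 1" unfolding Tset_def by simp
  finally show ?thesis by simp
qed

lemma Zs_box: assumes "z \<in> Zs s" shows "z \<in> box (Kc * s)"
  unfolding box_def
proof (safe)
  fix j
  have "z$j \<in> Tset s j" using assms unfolding Zs_def by auto
  then show "\<bar>z$j\<bar> \<le> int (Kc * s)" unfolding Tset_def
    by (auto split: if_splits simp: abs_mult intro!: mult_left_mono)
qed

lemma Zs_coord: assumes "z \<in> Zs s" shows "\<exists>t. z$j = int Kc * t"
  using assms unfolding Zs_def Tset_def by (auto split: if_splits)

lemma Zs_s: assumes "z \<in> Zs s" "z \<in> Zs s'" shows "s = s'"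
proof -
  have "z$undefined = int Kc * int s" "z$undefined = int Kc * int s'"
  proof -
    have "z$undefined \<in> Tset s undefined" "z$undefined \<in> Tset s' undefined"
      using assms unfolding Zs_def by auto
    then show "z$undefined = int Kc * int s" "z$undefined = int Kc * int s'"
      unfolding Tset_def by auto
  qed
  then show ?thesis using Kc_pos by auto
qed

lemma Zs_ne: "Zs s \<noteq> {}" if "s \<ge> 1"
proof -
  have "(\<chi> j. if j = undefined then int Kc * int s else 0) \<in> Zs s"
    unfolding Zs_def Tset_def using that by (auto intro!: image_eqI[of 0])
  then show ?thesis by blast
qed

lemma Zs_disj:
  assumes "z \<in> Zs s" "z' \<in> Zs s'" "z \<noteq> z'"
  shows "shift_edges \<A> z \<inter> shift_edges \<A> z' = {}"
proof (rule ccontr)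
  assume "shift_edges \<A> z \<inter> shift_edges \<A> z' \<noteq> {}"
  then obtain e where e: "e \<in> shift_edges \<A> z" "e \<in> shift_edges \<A> z'" by blast
  obtain j where j: "z$j \<noteq> z'$j" using assms(3) by (metis vec_eq_iff)
  obtain t where t: "z$j = int Kc * t" using Zs_coord[OF assms(1)] by blast
  obtain t' where t': "z'$j = int Kc * t'" using Zs_coord[OF assms(2)] by blast
  note tt = t t'
  have "t \<noteq> t'" using j tt by auto
  then have "\<bar>t - t'\<bar> \<ge> 1" by linarith
  then have "int Kc * 1 \<le> int Kc * \<bar>t - t'\<bar>" by (intro mult_left_mono) auto
  also have "\<dots> = \<bar>z$j - z'$j\<bar>" using tt by (simp add: abs_mult right_diff_distrib[symmetric])
  also have "\<dots> \<le> 2 * int b + 1" by (rule shift_overlap[OF A_sub e])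
  finally show False unfolding Kc_def by simp
qed

lemma Y_meas: "Y z \<in> borel_measurable M"
  unfolding Y_def by (rule borel_measurable_Max[OF shiftA_fin]) (use w_meas shiftA_nn in blast)

lemma Y_le: assumes "\<A> \<noteq> {}" "\<omega> \<in> space M"
  shows "Y z \<omega> \<le> t \<longleftrightarrow> \<omega> \<in> Bad t (shift_edges \<A> z)"
proof -
  have "shift_edges \<A> z \<noteq> {}" using assms unfolding shift_edges_def by auto
  then show ?thesis unfolding Y_def Bad_def using assms(2) shiftA_fin by (subst Max_le_iff) auto
qed

lemma indY: "indep_vars (\<lambda>_. borel) Y (\<Union>s. Zs s)"
proof -
  have "indep_vars (\<lambda>z. PiM (shift_edges \<A> z) (\<lambda>_. borel)) (\<lambda>z \<omega>. restrict (\<lambda>e. w e \<omega>) (shift_edges \<A> z)) (\<Union>s. Zs s)"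
  proof (rule indep_vars_restrict[OF indep])
    show "shift_edges \<A> z \<subseteq> nn_edges" for z by (rule shiftA_nn)
    show "disjoint_family_on (shift_edges \<A>) (\<Union>s. Zs s)"
      unfolding disjoint_family_on_def using Zs_disj by blast
  qed
  then have "indep_vars (\<lambda>_. borel) (\<lambda>z \<omega>. (\<lambda>f. Max (f ` shift_edges \<A> z)) (restrict (\<lambda>e. w e \<omega>) (shift_edges \<A> z))) (\<Union>s. Zs s)"
  proof (rule indep_vars_compose2)
    fix z
    show "(\<lambda>f. Max (f ` shift_edges \<A> z)) \<in> borel_measurable (PiM (shift_edges \<A> z) (\<lambda>_. (borel :: real measure)))"
      by (rule max_meas[OF shiftA_fin])
  qed
  also have "(\<lambda>z \<omega>. (\<lambda>f. Max (f ` shift_edges \<A> z)) (restrict (\<lambda>e. w e \<omega>) (shift_edges \<A> z))) = Y"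
    unfolding Y_def by (intro ext) (simp cong: image_cong)
  finally show ?thesis .
qed

end



context setting begin

definition lvlz :: "int^'d \<Rightarrow> real" where "lvlz z = g (real (nat (z$undefined) - b))"
definition Ev :: "int^'d \<Rightarrow> 'a set" where "Ev z = {\<omega>\<in>space M. lvlz z < Y z \<omega>}"

lemma Zs_und: assumes "z \<in> Zs s" shows "z$undefined = int Kc * int s"
proof -
  have "z$undefined \<in> Tset s undefined" using assms unfolding Zs_def by auto
  then show ?thesis unfolding Tset_def by simp
qed

lemma lvlz_Zs: "z \<in> Zs s \<Longrightarrow> lvlz z = g (real (Kc * s - b))"
  unfolding lvlz_def using Zs_und by (simp add: nat_mult_distrib)

lemma Ev_sets: "Ev z \<in> events"
  unfolding Ev_def using Y_meas by measurable

lemma Ev_vimage: "Ev z = Y z -` {lvlz z<..} \<inter> space M" unfolding Ev_def by auto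

lemma prob_Ev: assumes Ane: "\<A> \<noteq> {}" and z: "z \<in> Zs s"
  shows "prob (Ev z) = 1 - q (real (Kc * s - b))"
proof -
  have Bsub: "Bad t S \<subseteq> space M" for t S unfolding Bad_def by auto
  have "Ev z = {\<omega>\<in>space M. \<not> (Y z \<omega> \<le> lvlz z)}" unfolding Ev_def by (auto simp: not_le)
  also have "\<dots> = space M - Bad (lvlz z) (shift_edges \<A> z)"
    using Y_le[OF Ane] Bsub by blast
  finally have "Ev z = space M - Bad (lvlz z) (shift_edges \<A> z)" .
  then have "prob (Ev z) = 1 - prob (Bad (lvlz z) (shift_edges \<A> z))"
    using prob_compl Bad_sets[OF shiftA_fin shiftA_nn] by simp
  also have "prob (Bad (lvlz z) (shift_edges \<A> z)) = q (real (Kc * s - b))"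
    using prob_Bad_shift[OF Ane] lvlz_Zs[OF z] unfolding q_def by simp
  finally show ?thesis .
qed

lemma prob_W:
  assumes Ane: "\<A> \<noteq> {}" and nN: "1 \<le> n" "n < N"
  shows "prob (\<Inter>z\<in>(\<Union>s\<in>{n..<N}. Zs s). Ev z)
       \<le> exp (- (\<Sum>s\<in>{n..<N}. real s ^ (CARD('d) - 1) * q (real (Kc * s - b))))"
proof -
  define W where "W = (\<Union>s\<in>{n..<N}. Zs s)"
  have Wfin: "finite W" unfolding W_def using Zs_fin by auto
  have Wne: "W \<noteq> {}" unfolding W_def using Zs_ne[of n] nN by auto
  have Wsub: "W \<subseteq> (\<Union>s. Zs s)" unfolding W_def by auto
  have "prob (\<Inter>z\<in>W. Y z -` {lvlz z<..} \<inter> space M) = (\<Prod>z\<in>W. prob (Y z -` {lvlz z<..} \<inter> space M))"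
    by (rule indep_varsD[OF indY Wne Wfin Wsub]) auto
  then have "prob (\<Inter>z\<in>W. Ev z) = (\<Prod>z\<in>W. prob (Ev z))" unfolding Ev_vimage by simp
  also have "\<dots> = (\<Prod>s\<in>{n..<N}. \<Prod>z\<in>Zs s. prob (Ev z))"
    unfolding W_def
  proof (rule prod.UNION_disjoint)
    show "\<forall>i\<in>{n..<N}. \<forall>j\<in>{n..<N}. i \<noteq> j \<longrightarrow> Zs i \<inter> Zs j = {}" using Zs_s by blast
  qed (auto simp: Zs_fin)
  also have "\<dots> = (\<Prod>s\<in>{n..<N}. (1 - q (real (Kc * s - b))) ^ (s ^ (CARD('d) - 1)))"
    by (intro prod.cong refl) (simp add: prob_Ev[OF Ane] card_Zs)
  also have "\<dots> \<le> (\<Prod>s\<in>{n..<N}. exp (- (real s ^ (CARD('d) - 1) * q (real (Kc * s - b)))))"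
  proof (rule prod_mono, rule conjI)
    fix s
    have x: "0 \<le> 1 - q (real (Kc * s - b))" using q_le1 by simp
    show "0 \<le> (1 - q (real (Kc * s - b))) ^ (s ^ (CARD('d) - 1))" using x by simp
    have "(1 - q (real (Kc * s - b))) ^ (s ^ (CARD('d) - 1)) \<le> exp (- q (real (Kc * s - b))) ^ (s ^ (CARD('d) - 1))"
      using x exp_minus_ge by (intro power_mono) auto
    also have "\<dots> = exp (- (real s ^ (CARD('d) - 1) * q (real (Kc * s - b))))"
      by (simp add: exp_of_nat_mult[symmetric])
    finally show "(1 - q (real (Kc * s - b))) ^ (s ^ (CARD('d) - 1)) \<le> exp (- (real s ^ (CARD('d) - 1) * q (real (Kc * s - b))))" .
  qed
  also have "\<dots> = exp (- (\<Sum>s\<in>{n..<N}. real s ^ (CARD('d) - 1) * q (real (Kc * s - b))))"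
    by (simp add: exp_sum[symmetric] sum_negf)
  finally show ?thesis unfolding W_def .
qed

end



context setting begin

lemma not_summable_aa:
  assumes inf: "\<not> (\<integral>\<^sup>+ u\<in>{0<..}. ennreal (u ^ (CARD('d) - 1) * measure \<mu> {..g u} ^ card \<A>) \<partial>lborel) < \<infinity>"
  shows "\<not> summable (\<lambda>s. real s ^ (CARD('d) - 1) * q (real (Kc * s - b)))"
proof
  define D where "D = CARD('d) - 1"
  define aa where "aa s = real s ^ D * q (real (Kc * s - b))" for s
  assume "summable (\<lambda>s. real s ^ (CARD('d) - 1) * q (real (Kc * s - b)))"
  then have sa: "summable aa" unfolding aa_def D_def .
  define c where "c s = (if s = 0 then real Kc ^ D else (2 * real Kc) ^ D * aa s)" for s
  have c_nonneg: "0 \<le> c s" for s unfolding c_def aa_def using q_nonneg by simp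
  have sc: "summable c"
  proof (rule summable_comparison_test')
    show "summable (\<lambda>s. (2 * real Kc) ^ D * aa s)" using sa by (rule summable_mult)
    show "norm (c s) \<le> (2 * real Kc) ^ D * aa s" if "s \<ge> 1" for s using that q_nonneg unfolding c_def aa_def by simp
  qed
  have "(\<integral>\<^sup>+ u\<in>{0<..}. ennreal (u ^ (CARD('d) - 1) * measure \<mu> {..g u} ^ card \<A>) \<partial>lborel)
      \<le> (\<Sum>s. ennreal (c s) * ennreal (real Kc))"
  proof (rule int_upper)
    show "real Kc > 0" using Kc_pos by simp
    show "- real b \<le> 0" by simp
    fix s u assume u: "0 < u" "- real b + real Kc * real s < u" "u \<le> - real b + real Kc * (real s + 1)"
    have f: "u ^ (CARD('d) - 1) * measure \<mu> {..g u} ^ card \<A> = u ^ D * q u"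
      unfolding integrand_eq D_def ..
    show "u ^ (CARD('d) - 1) * measure \<mu> {..g u} ^ card \<A> \<le> c s"
    proof (cases "s = 0")
      case True
      then have "u \<le> real Kc" using u by simp
      then have "u ^ D \<le> real Kc ^ D" using u by (intro power_mono) auto
      moreover have "q u \<le> 1" by (rule q_le1)
      ultimately have "u ^ D * q u \<le> real Kc ^ D * 1" using q_nonneg u
        by (intro mult_mono) auto
      then show ?thesis unfolding f c_def using True by simp
    next
      case False
      have kgt: "Kc * s > b"
      proof -
        have "Kc * s \<ge> Kc" using False by simp
        then show ?thesis unfolding Kc_def by linarith
      qed
      have rk: "real (Kc * s - b) = real Kc * real s - real b" using kgt by (simp add: of_nat_diff)
      have kpos: "real (Kc * s - b) > 0" using kgt by (metis of_nat_0_less_iff zero_less_diff)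
      have "u \<le> 2 * real Kc * real s"
      proof -
        have "real Kc * 1 \<le> real Kc * real s" using False by (intro mult_left_mono) auto
        then have "real Kc * (real s + 1) \<le> 2 * real Kc * real s" by (simp add: algebra_simps)
        then show ?thesis using u by linarith
      qed
      then have "u ^ D \<le> (2 * real Kc * real s) ^ D" using u by (intro power_mono) auto
      moreover have "q u \<le> q (real (Kc * s - b))" using kpos u rk by (intro q_mono) auto
      ultimately have "u ^ D * q u \<le> (2 * real Kc * real s) ^ D * q (real (Kc * s - b))"
        using q_nonneg u by (intro mult_mono) auto
      also have "\<dots> = c s" unfolding c_def aa_def using False by (simp add: power_mult_distrib)
      finally show ?thesis unfolding f .
    qed
  qed
  also have "\<dots> = (\<Sum>s. ennreal (c s * real Kc))" by (simp add: ennreal_mult'')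
  also have "\<dots> = ennreal (\<Sum>s. c s * real Kc)"
    using c_nonneg sc by (intro suminf_ennreal2) (auto intro: summable_mult2)
  also have "\<dots> < \<infinity>" by simp
  finally show False using inf by simp
qed

end



context setting begin

lemma divg:
  assumes Ane: "\<A> \<noteq> {}"
    and inf: "\<not> (\<integral>\<^sup>+ u\<in>{0<..}. ennreal (u ^ (CARD('d) - 1) * measure \<mu> {..g u} ^ card \<A>) \<partial>lborel) < \<infinity>"
  shows "prob LE = 0"
proof -
  define aa where "aa s = real s ^ (CARD('d) - 1) * q (real (Kc * s - b))" for s
  have aa_nonneg: "0 \<le> aa s" for s unfolding aa_def using q_nonneg by simp
  have nsa: "\<not> summable aa" using not_summable_aa[OF inf] unfolding aa_def .
  have big: "\<exists>N>n. B < (\<Sum>s\<in>{n..<N}. aa s)" for n B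
  proof (rule ccontr)
    assume "\<not> ?thesis"
    then have le: "\<And>N. N > n \<Longrightarrow> (\<Sum>s\<in>{n..<N}. aa s) \<le> B" by (meson not_le)
    have B0: "0 \<le> B" using le[of "Suc n"] aa_nonneg[of n] by simp
    have "summable aa"
    proof (rule summableI_nonneg_bounded[OF aa_nonneg])
      fix M
      show "(\<Sum>i<M. aa i) \<le> (\<Sum>i<n. aa i) + B"
      proof (cases "M \<le> n")
        case True
        then have "(\<Sum>i<M. aa i) \<le> (\<Sum>i<n. aa i)" using aa_nonneg by (intro sum_mono2) auto
        then show ?thesis using B0 by simp
      next
        case False
        have "(\<Sum>i<M. aa i) = (\<Sum>i\<in>{0..<n}. aa i) + (\<Sum>i\<in>{n..<M}. aa i)"
          using False by (simp add: lessThan_atLeast0 sum.atLeastLessThan_concat)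
        also have "\<dots> \<le> (\<Sum>i<n. aa i) + B" using le[of M] False by (simp add: lessThan_atLeast0)
        finally show ?thesis .
      qed
    qed
    then show False using nsa by simp
  qed
  define Ninf where "Ninf n = (\<Inter>z\<in>(\<Union>s\<in>{n..}. Zs s). Ev z)" for n
  have Ninf_sets: "Ninf n \<in> events" for n
  proof -
    have "Zs (Suc n) \<noteq> {}" by (rule Zs_ne) simp
    then have ne: "(\<Union>s\<in>{n..}. Zs s) \<noteq> {}" by auto
    have ct: "countable (\<Union>s\<in>{n..}. Zs s)" using Zs_fin by (intro countable_UN) (auto intro: countable_finite)
    show ?thesis unfolding Ninf_def by (rule sets.countable_INT'[OF ct ne]) (use Ev_sets in auto)
  qed
  have Ninf0: "prob (Ninf n) = 0" if n1: "n \<ge> 1" for n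
  proof (rule ccontr)
    assume "prob (Ninf n) \<noteq> 0"
    then have P: "prob (Ninf n) > 0" using measure_nonneg[of M "Ninf n"] by linarith
    obtain N where N: "N > n" "- ln (prob (Ninf n)) + 1 < (\<Sum>s\<in>{n..<N}. aa s)" using big by blast
    define W where "W = (\<Inter>z\<in>(\<Union>s\<in>{n..<N}. Zs s). Ev z)"
    have sub: "Ninf n \<subseteq> W" unfolding Ninf_def W_def by auto
    have ne: "(\<Union>s\<in>{n..<N}. Zs s) \<noteq> {}" using Zs_ne[OF n1] N by auto
    have Wev: "W \<in> events" unfolding W_def
      using Zs_fin Ev_sets ne by (intro sets.finite_INT) auto
    have i1: "prob (Ninf n) \<le> prob W" using sub Wev by (rule finite_measure_mono)
    have i2: "prob W \<le> exp (- (\<Sum>s\<in>{n..<N}. aa s))" unfolding aa_def W_def by (rule prob_W[OF Ane n1 N(1)])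
    have i3: "exp (- (\<Sum>s\<in>{n..<N}. aa s)) < exp (- (- ln (prob (Ninf n)) + 1))" using N(2) by simp
    have i4: "exp (- (- ln (prob (Ninf n)) + 1)) = prob (Ninf n) / exp 1" using P by (simp add: exp_add[symmetric] exp_diff)
    have "1 < exp (1::real)" by simp
    then have i5: "prob (Ninf n) / exp 1 < prob (Ninf n)" using P by (simp add: divide_less_eq)
    show False using i1 i2 i3 i4 i5 by linarith
  qed
  have null: "Ninf (Suc n) \<in> null_sets M" for n
    using Ninf0[of "Suc n"] Ninf_sets[of "Suc n"] by (auto simp: null_sets_def emeasure_eq_measure)
  have Unull: "(\<Union>n. Ninf (Suc n)) \<in> null_sets M" using null by blast
  have sub: "LE \<subseteq> (\<Union>n. Ninf (Suc n))"
  proof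
    fix \<omega> assume "\<omega> \<in> LE"
    then obtain n where n: "n \<ge> 1" "\<And>k z. k \<ge> n \<Longrightarrow> z \<in> box (k + b) \<Longrightarrow> \<omega> \<in> J_event M w (g (real k)) (shift_edges \<A> z)"
      unfolding LE_def by auto
    have "\<omega> \<in> Ninf n" unfolding Ninf_def
    proof (rule INT_I)
      fix z assume "z \<in> (\<Union>s\<in>{n..}. Zs s)"
      then obtain s where s: "s \<in> {n..}" and z: "z \<in> Zs s" by blast
      have s1: "s \<ge> 1" using s n(1) by auto
      define k where "k = Kc * s - b"
      have "Kc * s \<ge> Kc" using s1 by simp
      then have kk: "Kc * s \<ge> s + b" unfolding Kc_def using s1 by (simp add: algebra_simps)
      then have kn: "k \<ge> n" using s unfolding k_def by auto
      have kb: "k + b = Kc * s" unfolding k_def using kk by auto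
      have "\<omega> \<in> J_event M w (g (real k)) (shift_edges \<A> z)"
        using n(2)[OF kn] Zs_box[OF z] kb by simp
      then obtain e where e: "e \<in> shift_edges \<A> z" "g (real k) < w e \<omega>" "\<omega> \<in> space M"
        unfolding J_event_def by auto
      have "w e \<omega> \<le> Y z \<omega>" unfolding Y_def using e shiftA_fin by (intro Max_ge) auto
      moreover have "lvlz z = g (real k)" using lvlz_Zs[OF z] unfolding k_def .
      ultimately show "\<omega> \<in> Ev z" unfolding Ev_def using e by auto
    qed
    moreover have "n = Suc (n - 1)" using n(1) by simp
    ultimately show "\<omega> \<in> (\<Union>n. Ninf (Suc n))" by (metis UNIV_I UN_iff)
  qed
  have "prob LE \<le> prob (\<Union>n. Ninf (Suc n))" using sub Unull by (intro finite_measure_mono) auto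
  also have "\<dots> = 0" using Unull by (auto simp: null_sets_def emeasure_eq_measure)
  finally show ?thesis using measure_nonneg[of M LE] by linarith
qed

end



lemma int_infinite_empty:
  fixes D :: nat
  shows "\<not> (\<integral>\<^sup>+ u\<in>{0<..}. ennreal (u ^ D) \<partial>lborel) < \<infinity>"
proof
  define c where "c s = (if s = 0 then 0 else (1::real))" for s :: nat
  assume fin: "(\<integral>\<^sup>+ u\<in>{0<..}. ennreal (u ^ D) \<partial>lborel) < \<infinity>"
  have "(\<Sum>s. ennreal (c s)) \<le> (\<integral>\<^sup>+ u\<in>{0<..}. ennreal (u ^ D) \<partial>lborel)"
  proof (rule int_lower)
    fix s u assume su: "real s < u" "u \<le> real s + 1"
    show "c s \<le> u ^ D"
    proof (cases "s = 0")
      case True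
      then show ?thesis unfolding c_def using su by simp
    next
      case False
      then have "u \<ge> 1" using su by linarith
      then show ?thesis unfolding c_def using False by (simp add: one_le_power)
    qed
  qed
  then have "(\<Sum>s. ennreal (c s)) \<noteq> top" using fin by (auto simp: top_unique)
  then have "summable c" by (intro summable_suminf_not_top) (auto simp: c_def)
  then have "summable (\<lambda>s. c (s + 1))" by (subst summable_iff_shift)
  then have "summable (\<lambda>s::nat. 1::real)" by (simp add: c_def)
  then show False by (simp add: summable_const_iff)
qed

theorem lemma2p1:
  fixes M :: "'a measure"
    and w :: "(int^'d) set \<Rightarrow> 'a \<Rightarrow> real"
    and \<mu> :: "real measure"
    and g :: "real \<Rightarrow> real"
    and b :: nat
    and \<A> :: "(int^'d) set set"
  assumes "prob_space M"
    and "CARD('d) \<ge> 2"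
    and "prob_space.indep_vars M (\<lambda>_. borel) w nn_edges"
    and "\<And>e. e \<in> nn_edges \<Longrightarrow> distr M borel (w e) = \<mu>"
    and "\<And>e \<omega>. e \<in> nn_edges \<Longrightarrow> \<omega> \<in> space M \<Longrightarrow> w e \<omega> > 0"
    and "\<And>u. u > 0 \<Longrightarrow> g u > 0"
    and "\<And>u v. 0 < u \<Longrightarrow> u \<le> v \<Longrightarrow> g v \<le> g u"
    and "(g \<longlongrightarrow> 0) at_top"
    and "\<A> \<subseteq> edges_of (box b)"
  shows "measure M (\<Union>n\<in>{1..}. \<Inter>k\<in>{n..}. \<Inter>z\<in>box (k + b).
            J_event M w (g (real k)) (shift_edges \<A> z))
         = (if (\<integral>\<^sup>+ u\<in>{0<..}. ennreal (u ^ (CARD('d) - 1) * measure \<mu> {..g u} ^ card \<A>) \<partial>lborel) < \<infinity>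
            then 1 else 0)"
proof -
  interpret S: setting M w \<mu> g b \<A>
    by (rule setting.intro[OF assms(1) setting_axioms.intro[OF assms(3-9)]])
  have LE: "(\<Union>n\<in>{1..}. \<Inter>k\<in>{n..}. \<Inter>z\<in>box (k + b).
            J_event M w (g (real k)) (shift_edges \<A> z)) = S.LE" unfolding S.LE_def ..
  show ?thesis
  proof (cases "\<A> = {}")
    case True
    have "J_event M w t (shift_edges \<A> z) = {}" for t z
      unfolding J_event_def shift_edges_def True by simp
    then have "S.LE = {}" unfolding S.LE_def using zero_in_box by blast
    moreover have "\<not> (\<integral>\<^sup>+ u\<in>{0<..}. ennreal (u ^ (CARD('d) - 1) * measure \<mu> {..g u} ^ card \<A>) \<partial>lborel) < \<infinity>"
      using int_infinite_empty[of "CARD('d) - 1"] True by simp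
    ultimately show ?thesis unfolding LE by simp
  next
    case False
    then show ?thesis unfolding LE using S.conv S.divg by auto
  qed
qed



end
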